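(* Let $(p,l)$ be an irregular pair. For even $m\ge 2$ put $Q(m)=\operatorname{num}\!\left(\frac{B_m}{m}\right)\Big/\operatorname{num}\!\left(\frac{B_m}{m(m-1)}\right)$, and define \[ A(p)=\min_{k\in\mathbb{N}_0}\left\{\, m=l+k(p-1) \;:\; Q(m)=p \,\right\}. \] Then $A(p)=(l-1)p+1$ holds, and this is the smallest possible value, if and only if one of the following cases holds: (1) $l-1$ has no irregular prime factors; (2) every irregular prime divisor $q$ of $l-1$ satisfies $q\nmid B_{(l-1)p+1}/((l-1)p+1)$ (i.e. $q$ does not divide the numerator of this rational number).
   Context: $B_n$ denotes the $n$-th Bernoulli number, defined by $\frac{z}{e^z-1}=\sum_{n\ge0}B_n\frac{z^n}{n!}$. For a rational number $r$, $\operatorname{num}(r)$ is its numerator (in lowest terms). For an odd prime $p$, a pair $(p,l)$ is an irregular pair if $l$ is even, $2\le l\le p-3$ and $p\mid B_l$. An odd prime $p$ is irregular if there is at least one irregular pair $(p,l)$. *)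

theory Defs
  imports "HOL-Computational_Algebra.Computational_Algebra"
begin

definition bernoulli :: "nat \<Rightarrow> rat" where
  "bernoulli n = fact n * fps_nth (fps_X / (fps_exp 1 - 1)) n"

definition num :: "rat \<Rightarrow> int" where
  "num r = fst (quotient_of r)"

definition irregular_pair :: "nat \<Rightarrow> nat \<Rightarrow> bool" where
  "irregular_pair p l \<longleftrightarrow> prime p \<and> odd p \<and> even l \<and> 2 \<le> l \<and> l + 3 \<le> p
     \<and> int p dvd num (bernoulli l)"

definition irregular_prime :: "nat \<Rightarrow> bool" where
  "irregular_prime p \<longleftrightarrow> prime p \<and> odd p \<and> (\<exists>l. irregular_pair p l)"

definition Q :: "nat \<Rightarrow> rat" where
  "Q m = of_int (num (bernoulli m / of_nat m))
         / of_int (num (bernoulli m / (of_nat m * (of_nat m - 1))))"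

definition A_set :: "nat \<Rightarrow> nat \<Rightarrow> nat set" where
  "A_set p l = {m. \<exists>k::nat. m = l + k * (p - 1) \<and> Q m = of_nat p}"

definition A :: "nat \<Rightarrow> nat \<Rightarrow> nat" where
  "A p l = (LEAST m. m \<in> A_set p l)"

end

theory Submission
  imports Defs "HOL-Number_Theory.Number_Theory"
begin

definition Bf :: "rat fps" where "Bf = fps_X / (fps_exp 1 - 1)"

lemma bernoulli_Bf: "bernoulli n = fact n * Bf $ n"
  by (simp add: bernoulli_def Bf_def)

lemma Bf_nth: "Bf $ n = bernoulli n / fact n"
  by (simp add: bernoulli_Bf)

lemma subdeg_E1: "subdegree (fps_exp (1::rat) - 1) = 1"
  by (rule subdegreeI) auto

lemma Bf_mult: "Bf * (fps_exp 1 - 1) = fps_X"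
proof -
  have ne: "fps_exp (1::rat) - 1 \<noteq> 0"
  proof
    assume "fps_exp (1::rat) - 1 = 0"
    hence "(fps_exp (1::rat) - 1) $ 1 = 0" by simp
    thus False by simp
  qed
  show ?thesis unfolding Bf_def
  proof (rule fps_times_divide_eq[OF ne])
    show "subdegree (fps_exp (1::rat) - 1) \<le> subdegree (fps_X :: rat fps)"
      unfolding subdeg_E1 by simp
  qed
qed

lemma exp_sum_mult:
  "(\<Sum>a<N. fps_exp (of_nat a :: rat)) * (fps_exp 1 - 1) = fps_exp (of_nat N) - 1"
proof (induction N)
  case 0 then show ?case by simp
next
  case (Suc N)
  have "fps_exp (of_nat N :: rat) * fps_exp 1 = fps_exp (of_nat (Suc N))"
    by (simp add: fps_exp_add_mult[symmetric] add.commute)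
  then show ?case using Suc by (simp add: algebra_simps)
qed

lemma faulhaber:
  "(\<Sum>a<N. (of_nat a :: rat) ^ m) =
     (\<Sum>i\<le>m. of_nat (m choose i) * bernoulli i * of_nat N ^ (m + 1 - i) / of_nat (m + 1 - i))"
proof -
  let ?P = "\<Sum>a<N. fps_exp (of_nat a :: rat)"
  have eq: "fps_X * ?P = Bf * (fps_exp (of_nat N) - 1)"
    using Bf_mult exp_sum_mult[of N] by (metis mult.assoc mult.commute)
  have "(fps_X * ?P) $ Suc m = (\<Sum>a<N. (of_nat a :: rat) ^ m) / fact m"
    by (simp add: fps_sum_nth sum_divide_distrib)
  moreover have "(Bf * (fps_exp (of_nat N) - 1)) $ Suc m =
      (\<Sum>i\<le>m. bernoulli i / fact i * (of_nat N ^ (Suc m - i) / fact (Suc m - i)))"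
  proof -
    have "(Bf * (fps_exp (of_nat N) - 1)) $ Suc m =
       (\<Sum>i=0..Suc m. Bf $ i * (fps_exp (of_nat N) - 1) $ (Suc m - i))"
      by (rule fps_mult_nth)
    also have "\<dots> = (\<Sum>i=0..m. Bf $ i * (fps_exp (of_nat N) - 1) $ (Suc m - i))"
      by (simp add: sum.atLeast0_atMost_Suc)
    also have "\<dots> = (\<Sum>i=0..m. bernoulli i / fact i * (of_nat N ^ (Suc m - i) / fact (Suc m - i)))"
    proof (intro sum.cong refl)
      fix i assume "i \<in> {0..m}"
      hence "Suc m - i \<noteq> 0" by simp
      thus "Bf $ i * (fps_exp (of_nat N) - 1) $ (Suc m - i) =
        bernoulli i / fact i * (of_nat N ^ (Suc m - i) / fact (Suc m - i))"
        by (simp add: Bf_nth)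
    qed
    also have "\<dots> = (\<Sum>i\<le>m. bernoulli i / fact i * (of_nat N ^ (Suc m - i) / fact (Suc m - i)))"
      by (simp add: atLeast0AtMost)
    finally show ?thesis .
  qed
  ultimately have "(\<Sum>a<N. (of_nat a :: rat) ^ m) =
     fact m * (\<Sum>i\<le>m. bernoulli i / fact i * (of_nat N ^ (Suc m - i) / fact (Suc m - i)))"
    using eq by (simp add: field_simps)
  also have "\<dots> = (\<Sum>i\<le>m. of_nat (m choose i) * bernoulli i * of_nat N ^ (m + 1 - i) / of_nat (m + 1 - i))"
    unfolding sum_distrib_left
  proof (intro sum.cong refl)
    fix i assume "i \<in> {..m}"
    hence i: "i \<le> m" by simp
    have f1: "fact (Suc m - i) = (of_nat (Suc m - i) :: rat) * fact (m - i)"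
      using i by (simp add: Suc_diff_le)
    have f2: "(of_nat (m choose i) :: rat) = fact m / (fact i * fact (m - i))"
      using i by (simp add: binomial_fact)
    show "fact m * (bernoulli i / fact i * (of_nat N ^ (Suc m - i) / fact (Suc m - i))) =
        of_nat (m choose i) * bernoulli i * of_nat N ^ (m + 1 - i) / of_nat (m + 1 - i)"
      using i by (simp add: f1 f2 field_simps)
  qed
  finally show ?thesis .
qed

lemma bern_small: "bernoulli 0 = 1" "bernoulli 1 = -1/2" "bernoulli 2 = 1/6"
proof -
  have f: "\<And>m. (0::rat) ^ m = (\<Sum>i\<le>m. of_nat (m choose i) * bernoulli i / of_nat (m + 1 - i))"
  proof -
    fix m show "(0::rat) ^ m = (\<Sum>i\<le>m. of_nat (m choose i) * bernoulli i / of_nat (m + 1 - i))"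
      using faulhaber[where N=1 and m=m] by simp
  qed
  have b0: "bernoulli 0 = 1" using f[of 0] by simp
  have b1: "bernoulli 1 = -1/2" using f[of 1] b0 by simp
  have b2: "bernoulli 2 = 1/6" using f[of 2] b0 b1 by (simp add: numeral_2_eq_2)
  show "bernoulli 0 = 1" "bernoulli 1 = -1/2" "bernoulli 2 = 1/6" by fact+
qed

definition fneg :: "rat fps \<Rightarrow> rat fps" where "fneg f = Abs_fps (\<lambda>n. (-1)^n * f $ n)"

lemma fneg_nth: "fneg f $ n = (-1)^n * f $ n" by (simp add: fneg_def)

lemma fneg_mult: "fneg (f * g) = fneg f * fneg g"
proof (rule fps_ext)
  fix n
  have "fneg (f * g) $ n = (\<Sum>i=0..n. (-1)^n * (f $ i * g $ (n - i)))"
    by (simp add: fneg_nth fps_mult_nth sum_distrib_left)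
  also have "\<dots> = (\<Sum>i=0..n. ((-1)^i * f $ i) * ((-1)^(n-i) * g $ (n - i)))"
  proof (intro sum.cong refl)
    fix i assume "i \<in> {0..n}"
    hence "(-1::rat)^n = (-1)^i * (-1)^(n-i)" by (simp add: power_add[symmetric])
    thus "(-1)^n * (f $ i * g $ (n - i)) = ((-1)^i * f $ i) * ((-1)^(n-i) * g $ (n - i))"
      by simp
  qed
  also have "\<dots> = (fneg f * fneg g) $ n" by (simp add: fneg_nth fps_mult_nth)
  finally show "fneg (f * g) $ n = (fneg f * fneg g) $ n" .
qed

lemma fneg_diff: "fneg (f - g) = fneg f - fneg g"
  by (rule fps_ext) (simp add: fneg_nth algebra_simps)

lemma fneg_one: "fneg 1 = 1"
  by (rule fps_ext) (simp add: fneg_nth)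

lemma fneg_X: "fneg fps_X = - fps_X"
  by (rule fps_ext) (simp add: fneg_nth fps_X_nth)

lemma fneg_exp: "fneg (fps_exp 1) = fps_exp (-1)"
  by (rule fps_ext) (simp add: fneg_nth power_minus')

lemma fneg_Bf: "fneg Bf = Bf + fps_X"
proof -
  let ?E = "fps_exp (1::rat)"
  have E1: "fps_exp (-1) * ?E = (1 :: rat fps)"
    by (simp add: fps_exp_add_mult[symmetric])
  have "fneg Bf * (fps_exp (-1) - 1) = - fps_X"
    using arg_cong[OF Bf_mult, of fneg] by (simp add: fneg_mult fneg_diff fneg_one fneg_X fneg_exp)
  hence "fneg Bf * (fps_exp (-1) - 1) * ?E = - fps_X * ?E" by simp
  moreover have "fneg Bf * (fps_exp (-1) - 1) * ?E = fneg Bf * (fps_exp (-1) * ?E) - fneg Bf * ?E"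
    by (simp only: mult.assoc right_diff_distrib left_diff_distrib mult_1_left)
  ultimately have "fneg Bf - fneg Bf * ?E = - fps_X * ?E" by (simp only: E1 mult_1_right)
  moreover have "fneg Bf * (?E - 1) = -(fneg Bf - fneg Bf * ?E)"
    by (simp only: right_diff_distrib mult_1_right minus_diff_eq)
  ultimately have a: "fneg Bf * (?E - 1) = fps_X * ?E"
    by (simp only: minus_minus mult_minus_left)
  have b: "(Bf * ?E) * (?E - 1) = fps_X * ?E"
    using Bf_mult by (metis mult.assoc mult.commute)
  have ne: "?E - 1 \<noteq> 0"
  proof
    assume "?E - 1 = 0"
    hence "(?E - 1) $ 1 = 0" by simp
    thus False by simp
  qed
  from a b have "fneg Bf * (?E - 1) = (Bf * ?E) * (?E - 1)" by simp
  with ne have "fneg Bf = Bf * ?E" by (metis mult_right_cancel)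
  also have "\<dots> = Bf * (?E - 1) + Bf" by (simp only: right_diff_distrib mult_1_right diff_add_cancel)
  also have "\<dots> = Bf + fps_X" using Bf_mult by simp
  finally show ?thesis .
qed

lemma bern_odd: assumes "odd n" "n \<noteq> 1" shows "bernoulli n = 0"
proof -
  have "fneg Bf $ n = (Bf + fps_X) $ n" by (simp add: fneg_Bf)
  hence "- Bf $ n = Bf $ n" using assms by (simp add: fneg_nth fps_X_nth)
  hence "Bf $ n = 0" by simp
  thus ?thesis by (simp add: bernoulli_Bf)
qed

definition pint :: "nat \<Rightarrow> rat \<Rightarrow> bool" where
  "pint p x \<longleftrightarrow> (\<exists>a b. \<not> int p dvd b \<and> x = of_int a / of_int b)"

lemma pint_of_int: "prime p \<Longrightarrow> pint p (of_int a)"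
  unfolding pint_def by (rule exI[of _ a], rule exI[of _ 1]) (auto simp: prime_gt_1_nat)

lemma pint_of_nat: "prime p \<Longrightarrow> pint p (of_nat a)"
  using pint_of_int[of p "int a"] by simp

lemma pint_0: "prime p \<Longrightarrow> pint p 0" using pint_of_int[of p 0] by simp
lemma pint_1: "prime p \<Longrightarrow> pint p 1" using pint_of_int[of p 1] by simp

lemma pint_frac: "\<not> int p dvd b \<Longrightarrow> pint p (of_int a / of_int b)"
  unfolding pint_def by blast

lemma pint_inv_nat: "\<not> p dvd b \<Longrightarrow> pint p (1 / of_nat b)"
  using pint_frac[of p "int b" 1] by simp

lemma nd_mult: "prime p \<Longrightarrow> \<not> int p dvd b \<Longrightarrow> \<not> int p dvd d \<Longrightarrow> \<not> int p dvd (b * d)"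
  by (simp add: prime_dvd_mult_iff)

lemma pint_add: assumes "prime p" "pint p x" "pint p y" shows "pint p (x + y)"
proof -
  obtain a b where x: "\<not> int p dvd b" "x = of_int a / of_int b" using assms(2) pint_def by auto
  obtain c d where y: "\<not> int p dvd d" "y = of_int c / of_int d" using assms(3) pint_def by auto
  have b0: "b \<noteq> 0" "d \<noteq> 0" using x y by auto
  have "x + y = of_int (a * d + c * b) / of_int (b * d)" using x y b0 by (simp add: field_simps)
  moreover have "\<not> int p dvd (b * d)" using nd_mult[OF _ x(1) y(1)] assms(1) by (simp add: prime_nat_iff_prime)
  ultimately show ?thesis using pint_frac by metis
qed

lemma pint_mult: assumes "prime p" "pint p x" "pint p y" shows "pint p (x * y)"
proof -
  obtain a b where x: "\<not> int p dvd b" "x = of_int a / of_int b" using assms(2) pint_def by auto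
  obtain c d where y: "\<not> int p dvd d" "y = of_int c / of_int d" using assms(3) pint_def by auto
  have "x * y = of_int (a * c) / of_int (b * d)" using x y by simp
  moreover have "\<not> int p dvd (b * d)" using nd_mult[OF _ x(1) y(1)] assms(1) by (simp add: prime_nat_iff_prime)
  ultimately show ?thesis using pint_frac by metis
qed

lemma pint_uminus: assumes "prime p" "pint p x" shows "pint p (- x)"
  using pint_mult[OF assms(1) pint_of_int[OF assms(1), of "-1"] assms(2)] by simp

lemma pint_diff: assumes "prime p" "pint p x" "pint p y" shows "pint p (x - y)"
  using pint_add[OF assms(1,2) pint_uminus[OF assms(1,3)]] by simp

lemma pint_sum: assumes "prime p" "\<And>i. i \<in> S \<Longrightarrow> pint p (f i)" shows "pint p (\<Sum>i\<in>S. f i)"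
  using assms(2)
proof (induction S rule: infinite_finite_induct)
  case (infinite S) then show ?case using pint_0[OF assms(1)] by simp
next
  case empty then show ?case using pint_0[OF assms(1)] by simp
next
  case (insert x F) then show ?case using pint_add[OF assms(1)] by simp
qed

lemma pint_div_nat: assumes "prime p" "pint p x" "\<not> p dvd b" shows "pint p (x / of_nat b)"
  using pint_mult[OF assms(1,2) pint_inv_nat[OF assms(3)]] by simp

lemma pint_pow: assumes "prime p" "pint p x" shows "pint p (x ^ n)"
  by (induction n) (auto intro: pint_mult[OF assms(1)] pint_1[OF assms(1)] assms(2))

lemma num_dvd_iff: assumes "prime p"
  shows "int p dvd num x \<longleftrightarrow> pint p (x / of_nat p)"
proof -
  obtain n d where q: "quotient_of x = (n, d)" by (cases "quotient_of x") auto
  have d0: "d > 0" using quotient_of_denom_pos[OF q] .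
  have cop: "coprime n d" using quotient_of_coprime[OF q] .
  have xe: "x = of_int n / of_int d" using quotient_of_div[OF q] .
  have nu: "num x = n" by (simp add: num_def q)
  have pp: "prime (int p)" using assms by (simp add: prime_nat_iff_prime)
  show ?thesis
  proof
    assume "int p dvd num x"
    then obtain k where k: "n = int p * k" using nu by (auto elim: dvdE)
    have nd: "\<not> int p dvd d"
    proof
      assume "int p dvd d"
      hence "int p dvd gcd n d" using k by simp
      thus False using cop pp by (simp add: not_prime_unit)
    qed
    have "x / of_nat p = of_int k / of_int d" using xe k assms by (simp add: prime_gt_0_nat field_simps)
    thus "pint p (x / of_nat p)" using pint_frac[OF nd] by simp
  next
    assume "pint p (x / of_nat p)"
    then obtain a b where ab: "\<not> int p dvd b" "x / of_nat p = of_int a / of_int b" by (auto simp: pint_def)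
    have b0: "b \<noteq> 0" using ab by auto
    have "of_int n / of_int d = of_int (int p * a) / (of_int b :: rat)"
      using ab xe assms b0 d0 by (simp add: prime_gt_0_nat field_simps)
    hence "n * b = int p * a * d" using b0 d0 by (simp add: field_simps flip: of_int_mult of_int_eq_iff)
    hence "int p dvd n * b" by simp
    thus "int p dvd num x" using ab(1) pp nu by (simp add: prime_dvd_mult_iff)
  qed
qed

lemma pint_int_dvd: assumes "prime p" "pint p (of_int n / of_nat p)" shows "int p dvd n"
  using num_dvd_iff[OF assms(1), of "of_int n"] assms(2) by (simp add: num_def)

lemma pow_decomp: fixes p e :: nat assumes "prime p" "e > 0" shows "\<exists>v r. e = p ^ v * r \<and> \<not> p dvd r"
  using assms(2)
proof (induction e rule: less_induct)
  case (less e)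
  show ?case
  proof (cases "p dvd e")
    case True
    then obtain e' where e': "e = p * e'" by auto
    have "e' < e" "e' > 0" using e' less.prems prime_gt_1_nat[OF assms(1)] by auto
    then obtain v r where "e' = p ^ v * r" "\<not> p dvd r" using less.IH by blast
    then show ?thesis using e' by (intro exI[of _ "Suc v"] exI[of _ r]) auto
  next
    case False
    then show ?thesis by (intro exI[of _ 0] exI[of _ e]) auto
  qed
qed

lemma bern_ineq: "(p::nat) \<ge> 1 \<Longrightarrow> p ^ v \<ge> v * (p - 1) + 1"
proof (induction v)
  case 0 then show ?case by simp
next
  case (Suc v)
  have "Suc v * (p - 1) + 1 = v * (p - 1) + 1 + (p - 1)" by simp
  also have "\<dots> \<le> p ^ v + (p - 1)" using Suc by simp
  also have "\<dots> \<le> p ^ v + p ^ v * (p - 1)"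
  proof -
    have "1 \<le> p ^ v" using Suc.prems by simp
    hence "p - 1 \<le> p ^ v * (p - 1)" by (metis mult_le_mono1 mult_1)
    thus ?thesis by simp
  qed
  also have "\<dots> = p ^ Suc v" using Suc.prems by (simp add: algebra_simps)
  finally show ?case .
qed

lemma pint_pe: assumes "prime p" "c + 1 \<le> p" "c \<le> e" "e > 0" "c \<ge> 1"
  shows "pint p (of_nat p ^ (e - c) / of_nat e)"
proof -
  obtain v r where vr: "e = p ^ v * r" "\<not> p dvd r" using pow_decomp[OF assms(1,4)] by blast
  have r0: "r > 0" using vr assms(4) by (cases r) auto
  have pv: "p ^ v \<le> e" using vr r0 by simp
  have v: "v \<le> e - c"
  proof (cases "v = 0")
    case False
    have "v * (p - 1) + 1 \<le> e" using bern_ineq[of p v] pv prime_gt_1_nat[OF assms(1)] by simp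
    moreover have "v * (p - 1) \<ge> v * c" using assms(2) by (intro mult_le_mono2) linarith
    moreover have "v * c \<ge> v + (c - 1)" using False assms(5)
      by (cases c) (auto simp: algebra_simps)
    ultimately show ?thesis using assms by linarith
  qed simp
  have "(of_nat p ^ (e - c) / of_nat e :: rat) = of_nat p ^ (e - c - v) / of_nat r"
  proof -
    have "(of_nat p ^ (e - c) :: rat) = of_nat p ^ (e - c - v) * of_nat p ^ v"
    proof -
      have "e - c = (e - c - v) + v" using v by simp
      thus ?thesis by (metis power_add)
    qed
    thus ?thesis using vr r0 prime_gt_0_nat[OF assms(1)] by (simp add: field_simps)
  qed
  thus ?thesis using pint_div_nat[OF assms(1) pint_pow[OF assms(1) pint_of_nat[OF assms(1)]] vr(2)]
    by simp
qed

definition Sp :: "nat \<Rightarrow> nat \<Rightarrow> rat" where "Sp p m = (\<Sum>a<p. (of_nat a :: rat) ^ m)"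

lemma Sp_split: "Sp p m = of_nat p * bernoulli m +
   (\<Sum>i<m. of_nat (m choose i) * bernoulli i * of_nat p ^ (m + 1 - i) / of_nat (m + 1 - i))"
  unfolding Sp_def faulhaber by (simp add: lessThan_Suc_atMost[symmetric] add.commute)

lemma pint_Sp: "prime p \<Longrightarrow> pint p (Sp p m)"
  unfolding Sp_def by (intro pint_sum pint_pow pint_of_nat) auto

lemma F1: assumes "prime p" "p \<ge> 3"
  shows "pint p (of_nat p * bernoulli m) \<and> pint p ((Sp p m - of_nat p * bernoulli m) / of_nat p)"
proof (induction m rule: less_induct)
  case (less m)
  have p0: "(of_nat p :: rat) \<noteq> 0" using assms by simp
  have R: "pint p ((Sp p m - of_nat p * bernoulli m) / of_nat p)"
  proof -
    have "(Sp p m - of_nat p * bernoulli m) / of_nat p =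
      (\<Sum>i<m. of_nat (m choose i) * (of_nat p * bernoulli i) *
          (of_nat p ^ (m + 1 - i - 2) / of_nat (m + 1 - i)))"
      unfolding Sp_split add_diff_cancel_left' sum_divide_distrib
    proof (intro sum.cong refl)
      fix i assume "i \<in> {..<m}"
      hence "m + 1 - i = (m + 1 - i - 2) + 2" by simp
      hence "(of_nat p :: rat) ^ (m + 1 - i) = of_nat p ^ (m + 1 - i - 2) * of_nat p * of_nat p"
        by (metis power_add power2_eq_square mult.assoc)
      thus "of_nat (m choose i) * bernoulli i * of_nat p ^ (m + 1 - i) / of_nat (m + 1 - i) / of_nat p =
         of_nat (m choose i) * (of_nat p * bernoulli i) * (of_nat p ^ (m + 1 - i - 2) / of_nat (m + 1 - i))"
        using p0 by (simp add: field_simps)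
    qed
    moreover have "pint p (\<Sum>i<m. of_nat (m choose i) * (of_nat p * bernoulli i) *
          (of_nat p ^ (m + 1 - i - 2) / of_nat (m + 1 - i)))"
    proof (intro pint_sum[OF assms(1)])
      fix i assume i: "i \<in> {..<m}"
      have a: "pint p (of_nat (m choose i))" using pint_of_nat[OF assms(1)] .
      have b: "pint p (of_nat p * bernoulli i)" using less i by simp
      have c: "pint p (of_nat p ^ (m + 1 - i - 2) / of_nat (m + 1 - i))"
        using pint_pe[OF assms(1), of 2 "m + 1 - i"] assms i by simp
      show "pint p (of_nat (m choose i) * (of_nat p * bernoulli i) *
          (of_nat p ^ (m + 1 - i - 2) / of_nat (m + 1 - i)))"
        by (rule pint_mult[OF assms(1) pint_mult[OF assms(1) a b] c])
    qed
    ultimately show ?thesis by simp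
  qed
  have "of_nat p * bernoulli m = Sp p m - of_nat p * ((Sp p m - of_nat p * bernoulli m) / of_nat p)"
    using p0 by simp
  hence "pint p (of_nat p * bernoulli m)"
    using pint_diff[OF assms(1) pint_Sp[OF assms(1)] pint_mult[OF assms(1) pint_of_nat[OF assms(1)] R]]
    by metis
  with R show ?case by simp
qed

lemma F2: assumes "prime p" "p \<ge> 5" "even m" "m \<ge> 2"
  shows "pint p ((Sp p m - of_nat p * bernoulli m) / of_nat p ^ 2)"
proof -
  have p0: "(of_nat p :: rat) \<noteq> 0" using assms by simp
  have "(Sp p m - of_nat p * bernoulli m) / of_nat p ^ 2 =
      (\<Sum>i<m. of_nat (m choose i) * bernoulli i * of_nat p ^ (m + 1 - i) / of_nat (m + 1 - i) / of_nat p ^ 2)"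
    unfolding Sp_split add_diff_cancel_left' sum_divide_distrib ..
  moreover have "pint p (\<Sum>i<m. of_nat (m choose i) * bernoulli i * of_nat p ^ (m + 1 - i) / of_nat (m + 1 - i) / of_nat p ^ 2)"
  proof (intro pint_sum[OF assms(1)])
    fix i assume i: "i \<in> {..<m}"
    show "pint p (of_nat (m choose i) * bernoulli i * of_nat p ^ (m + 1 - i) / of_nat (m + 1 - i) / of_nat p ^ 2)"
    proof (cases "i = m - 1")
      case True
      have e: "m + 1 - i = 2" using True assms by simp
      have "of_nat (m choose i) * bernoulli i * of_nat p ^ (m + 1 - i) / of_nat (m + 1 - i) / of_nat p ^ 2
          = of_nat m * bernoulli (m - 1) / 2"
      proof -
        have "m choose i = m" using True assms binomial_symmetric[of 1 m] by simp
        thus ?thesis using True e p0 assms by (simp add: field_simps)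
      qed
      moreover have "pint p (of_nat m * bernoulli (m - 1) / 2)"
      proof (cases "m = 2")
        case True
        have "\<not> int p dvd 2" using assms(2) by (auto dest: zdvd_imp_le)
        hence "pint p (of_int (-1) / of_int 2)" by (rule pint_frac)
        then show ?thesis using bern_small True by simp
      next
        case False
        hence "bernoulli (m - 1) = 0" using assms by (intro bern_odd) auto
        then show ?thesis using pint_0[OF assms(1)] by simp
      qed
      ultimately show ?thesis by (simp only:)
    next
      case False
      hence ge: "m + 1 - i \<ge> 3" using i by simp
      have "m + 1 - i = (m + 1 - i - 3) + 1 + 2" using ge by simp
      hence "(of_nat p :: rat) ^ (m + 1 - i) = of_nat p ^ (m + 1 - i - 3) * of_nat p * of_nat p ^ 2"
        by (metis power_add power_one_right mult.assoc)
      hence "of_nat (m choose i) * bernoulli i * of_nat p ^ (m + 1 - i) / of_nat (m + 1 - i) / of_nat p ^ 2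
          = of_nat (m choose i) * (of_nat p * bernoulli i) * (of_nat p ^ (m + 1 - i - 3) / of_nat (m + 1 - i))"
        using p0 by (simp add: field_simps)
      moreover have "pint p (of_nat (m choose i) * (of_nat p * bernoulli i) * (of_nat p ^ (m + 1 - i - 3) / of_nat (m + 1 - i)))"
      proof -
        have a: "pint p (of_nat (m choose i))" using pint_of_nat[OF assms(1)] .
        have b: "pint p (of_nat p * bernoulli i)" using F1[OF assms(1)] assms by simp
        have c: "pint p (of_nat p ^ (m + 1 - i - 3) / of_nat (m + 1 - i))"
          using pint_pe[OF assms(1), of 3 "m + 1 - i"] assms ge by simp
        show ?thesis by (rule pint_mult[OF assms(1) pint_mult[OF assms(1) a b] c])
      qed
      ultimately show ?thesis by (simp only:)
    qed
  qed
  ultimately show ?thesis by (simp only:)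
qed

definition Si :: "nat \<Rightarrow> nat \<Rightarrow> int" where "Si p m = (\<Sum>a\<in>{1..<p}. (int a) ^ m)"

lemma Sp_Si: assumes "m \<ge> 1" shows "Sp p m = of_int (Si p m)"
proof -
  have "Sp p m = (\<Sum>a\<in>{..<p}. (of_nat a :: rat) ^ m)" by (simp add: Sp_def)
  also have "\<dots> = (\<Sum>a\<in>{1..<p}. (of_nat a :: rat) ^ m)"
  proof (rule sum.mono_neutral_right)
    show "\<forall>i\<in>{..<p} - {1..<p}. (of_nat i :: rat) ^ m = 0" using assms by auto
  qed auto
  also have "\<dots> = of_int (Si p m)" by (simp add: Si_def)
  finally show ?thesis .
qed

lemma cong_pow_p: fixes x y :: int
  assumes "prime p" "[x = y] (mod int p)" shows "[x ^ p = y ^ p] (mod int p ^ 2)"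
proof -
  obtain n where n: "p = Suc n" using assms(1) by (cases p) auto
  have d: "x ^ p - y ^ p = (x - y) * (\<Sum>i<p. x ^ i * y ^ (n - i))"
    using diff_power_eq_sum[of x n y] n by simp
  have "[(\<Sum>i<p. x ^ i * y ^ (n - i)) = (\<Sum>i<p. y ^ n)] (mod int p)"
  proof (rule cong_sum)
    fix i assume i: "i \<in> {..<p}"
    have "[x ^ i * y ^ (n - i) = y ^ i * y ^ (n - i)] (mod int p)"
      by (intro cong_mult cong_pow assms(2) cong_refl)
    moreover have "y ^ i * y ^ (n - i) = y ^ n" using i n by (simp flip: power_add)
    ultimately show "[x ^ i * y ^ (n - i) = y ^ n] (mod int p)" by simp
  qed
  moreover have "(\<Sum>i<p. y ^ n) = int p * y ^ n" by simp
  ultimately have "int p dvd (\<Sum>i<p. x ^ i * y ^ (n - i))"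
    by (metis cong_dvd_iff dvd_triv_left)
  moreover have "int p dvd (x - y)" using assms(2) by (simp add: cong_iff_dvd_diff)
  ultimately have "int p * int p dvd x ^ p - y ^ p" using d by (simp add: mult_dvd_mono)
  thus ?thesis by (simp add: cong_iff_dvd_diff power2_eq_square)
qed

lemma cong_pow_pm: fixes x y :: int
  assumes "prime p" "[x = y] (mod int p)" "p dvd m" shows "[x ^ m = y ^ m] (mod int p ^ 2)"
proof -
  obtain s where s: "m = p * s" using assms(3) by auto
  show ?thesis unfolding s power_mult by (intro cong_pow cong_pow_p assms(1,2))
qed

lemma mulperm: fixes p b :: nat assumes "prime p" "coprime b p"
  shows "bij_betw (\<lambda>a. a * b mod p) {1..<p} {1..<p}"
proof -
  have inj: "inj_on (\<lambda>a. a * b mod p) {1..<p}"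
  proof
    fix x y assume x: "x \<in> {1..<p}" and y: "y \<in> {1..<p}" and e: "x * b mod p = y * b mod p"
    hence "[x * b = y * b] (mod p)" by (simp add: cong_def)
    hence "[x = y] (mod p)" using assms(2) by (simp add: cong_mult_rcancel_nat)
    thus "x = y" using x y by (auto intro: cong_less_modulus_unique_nat)
  qed
  have sub: "(\<lambda>a. a * b mod p) ` {1..<p} \<subseteq> {1..<p}"
  proof
    fix z assume "z \<in> (\<lambda>a. a * b mod p) ` {1..<p}"
    then obtain a where a: "a \<in> {1..<p}" "z = a * b mod p" by auto
    have "\<not> p dvd a" using a by (auto dest: dvd_imp_le)
    moreover have "\<not> p dvd b" using assms by (metis coprime_commute coprime_absorb_right prime_nat_iff not_prime_1 coprime_common_divisor_nat dvd_refl)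
    ultimately have "\<not> p dvd a * b" using assms(1) by (simp add: prime_dvd_mult_iff)
    hence "z \<noteq> 0" using a by (simp add: dvd_eq_mod_eq_0)
    moreover have "z < p" using a assms(1) prime_gt_0_nat by simp
    ultimately show "z \<in> {1..<p}" by simp
  qed
  have "(\<lambda>a. a * b mod p) ` {1..<p} = {1..<p}" by (rule endo_inj_surj[OF _ sub inj]) simp
  with inj show ?thesis by (simp add: bij_betw_def)
qed

lemma sum_perm_dvd: fixes M :: int
  assumes "prime p" "coprime b p"
    "\<And>x y. [x = y] (mod int p) \<Longrightarrow> [x ^ m = y ^ m] (mod M)"
    "coprime M (int b ^ m - 1)"
  shows "M dvd Si p m"
proof -
  have "Si p m = (\<Sum>a\<in>{1..<p}. (int (a * b mod p)) ^ m)"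
    unfolding Si_def using sum.reindex_bij_betw[OF mulperm[OF assms(1,2)], of "\<lambda>a. (int a) ^ m"]
    by simp
  moreover have "[(\<Sum>a\<in>{1..<p}. (int (a * b mod p)) ^ m) = (\<Sum>a\<in>{1..<p}. (int a * int b) ^ m)] (mod M)"
  proof (rule cong_sum, rule assms(3))
    fix a show "[int (a * b mod p) = int a * int b] (mod int p)"
      by (simp add: cong_def of_nat_mod[symmetric] flip: of_nat_mult) 
  qed
  moreover have "(\<Sum>a\<in>{1..<p}. (int a * int b) ^ m) = int b ^ m * Si p m"
    by (simp add: Si_def power_mult_distrib sum_distrib_left mult.commute)
  ultimately have "[Si p m = int b ^ m * Si p m] (mod M)" by simp
  hence "M dvd (int b ^ m - 1) * Si p m"
    by (simp add: cong_iff_dvd_diff algebra_simps dvd_diff_commute)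
  thus ?thesis using assms(4) by (simp add: coprime_dvd_mult_right_iff)
qed

lemma primroot_ex: assumes "prime p"
  obtains b where "coprime b p" "\<And>m. int p dvd (int b ^ m - 1) \<longleftrightarrow> (p - 1) dvd m"
proof -
  obtain b where b: "b \<in> totatives p" "ord p b = p - 1" using residue_prime_has_primroot[OF assms] by blast
  have cop: "coprime b p" using b(1) by (simp add: totatives_def coprime_commute)
  have "int p dvd (int b ^ m - 1) \<longleftrightarrow> (p - 1) dvd m" for m
  proof -
    have "int p dvd (int b ^ m - 1) \<longleftrightarrow> [int b ^ m = int 1] (mod int p)"
      by (simp add: cong_iff_dvd_diff)
    also have "\<dots> \<longleftrightarrow> [b ^ m = 1] (mod p)" by (metis cong_int_iff of_nat_power)
    also have "\<dots> \<longleftrightarrow> (p - 1) dvd m" using ord_divides[of b m p] b(2) by simp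
    finally show ?thesis .
  qed
  with cop that show ?thesis by blast
qed

lemma P0: assumes "prime p" "\<not> (p - 1) dvd m" shows "int p dvd Si p m"
proof -
  obtain b where b: "coprime b p" "\<And>m. int p dvd (int b ^ m - 1) \<longleftrightarrow> (p - 1) dvd m"
    using primroot_ex[OF assms(1)] by blast
  have pp: "prime (int p)" using assms(1) by (simp add: prime_nat_iff_prime)
  have "coprime (int p) (int b ^ m - 1)" using b(2)[of m] assms(2) pp
    by (simp add: prime_imp_coprime)
  thus ?thesis by (intro sum_perm_dvd[OF assms(1) b(1)]) (auto intro: cong_pow)
qed

lemma P1: assumes "prime p" "\<not> (p - 1) dvd m" "p dvd m" shows "int p ^ 2 dvd Si p m"
proof -
  obtain b where b: "coprime b p" "\<And>m. int p dvd (int b ^ m - 1) \<longleftrightarrow> (p - 1) dvd m"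
    using primroot_ex[OF assms(1)] by blast
  have pp: "prime (int p)" using assms(1) by (simp add: prime_nat_iff_prime)
  have "coprime (int p) (int b ^ m - 1)" using b(2)[of m] assms(2) pp
    by (simp add: prime_imp_coprime)
  hence "coprime (int p ^ 2) (int b ^ m - 1)" by simp
  thus ?thesis by (intro sum_perm_dvd[OF assms(1) b(1)]) (auto intro: cong_pow_pm assms)
qed

lemma P2: assumes "prime p" "(p - 1) dvd m" shows "int p dvd (Si p m + 1)"
proof -
  have "[Si p m = (\<Sum>a\<in>{1..<p}. 1)] (mod int p)"
    unfolding Si_def
  proof (rule cong_sum)
    fix a assume a: "a \<in> {1..<p}"
    obtain s where s: "m = (p - 1) * s" using assms(2) by auto
    have "\<not> p dvd a" using a by (auto dest: dvd_imp_le)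
    hence "[a ^ (p - 1) = 1] (mod p)" using fermat_theorem[OF assms(1)] by simp
    hence "[(a ^ (p - 1)) ^ s = 1 ^ s] (mod p)" by (rule cong_pow)
    hence "[a ^ m = 1] (mod p)" by (simp add: s power_mult)
    thus "[int a ^ m = 1] (mod int p)" by (metis cong_int_iff of_nat_power of_nat_1)
  qed
  moreover have "(\<Sum>a\<in>{1..<p}. (1::int)) = int p - 1" using prime_gt_0_nat[OF assms(1)] by simp
  ultimately have "int p dvd Si p m - (int p - 1)" by (simp add: cong_iff_dvd_diff)
  hence "int p dvd (Si p m - (int p - 1)) + int p" by (rule dvd_add) simp
  moreover have "(Si p m - (int p - 1)) + int p = Si p m + 1" by simp
  ultimately show ?thesis by metis
qed

lemma sq_dvd_geom: fixes u :: int shows "(u - 1)^2 dvd (u ^ k - 1 - int k * (u - 1))"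
proof (induction k)
  case 0 then show ?case by simp
next
  case (Suc k)
  have "u ^ Suc k - 1 - int (Suc k) * (u - 1) = u * (u ^ k - 1 - int k * (u - 1)) + int k * (u - 1)^2"
    by (simp add: algebra_simps power2_eq_square)
  then show ?case using Suc by simp
qed

lemma Lin: assumes "prime p"
  shows "int p ^ 2 dvd Si p (l + k * (p - 1)) - Si p l - int k * (Si p (l + (p - 1)) - Si p l)"
proof -
  have "Si p (l + k * (p - 1)) - Si p l - int k * (Si p (l + (p - 1)) - Si p l) =
    (\<Sum>a\<in>{1..<p}. int a ^ l * ((int a ^ (p - 1)) ^ k - 1 - int k * (int a ^ (p - 1) - 1)))"
  proof -
    have "\<And>a. int a ^ l * ((int a ^ (p - 1)) ^ k - 1 - int k * (int a ^ (p - 1) - 1)) =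
       int a ^ (l + k * (p - 1)) - int a ^ l - int k * (int a ^ (l + (p - 1)) - int a ^ l)"
    proof -
      fix a
      have e1: "int a ^ (l + k * (p - 1)) = int a ^ l * (int a ^ (p - 1)) ^ k"
        by (simp only: power_add power_mult[symmetric] mult.commute[of k "p - 1"])
      have e2: "int a ^ (l + (p - 1)) = int a ^ l * int a ^ (p - 1)"
        by (simp only: power_add)
      show "int a ^ l * ((int a ^ (p - 1)) ^ k - 1 - int k * (int a ^ (p - 1) - 1)) =
       int a ^ (l + k * (p - 1)) - int a ^ l - int k * (int a ^ (l + (p - 1)) - int a ^ l)"
        unfolding e1 e2 by (simp add: algebra_simps)
    qed
    hence "(\<Sum>a\<in>{1..<p}. int a ^ l * ((int a ^ (p - 1)) ^ k - 1 - int k * (int a ^ (p - 1) - 1))) =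
       (\<Sum>a\<in>{1..<p}. int a ^ (l + k * (p - 1)) - int a ^ l - int k * (int a ^ (l + (p - 1)) - int a ^ l))"
      by simp
    also have "\<dots> = Si p (l + k * (p - 1)) - Si p l - int k * (Si p (l + (p - 1)) - Si p l)"
      by (simp add: Si_def sum_subtractf flip: sum_distrib_left)
    finally show ?thesis by simp
  qed
  also have "int p ^ 2 dvd \<dots>"
  proof (rule dvd_sum)
    fix a assume a: "a \<in> {1..<p}"
    have "\<not> p dvd a" using a by (auto dest: dvd_imp_le)
    hence "[a ^ (p - 1) = 1] (mod p)" using fermat_theorem[OF assms(1)] by simp
    hence "[int a ^ (p - 1) = 1] (mod int p)" by (metis cong_int_iff of_nat_power of_nat_1)
    hence "int p dvd int a ^ (p - 1) - 1" by (simp add: cong_iff_dvd_diff)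
    hence "int p ^ 2 dvd (int a ^ (p - 1) - 1) ^ 2" by (simp add: power2_eq_square mult_dvd_mono)
    hence "int p ^ 2 dvd ((int a ^ (p - 1)) ^ k - 1 - int k * (int a ^ (p - 1) - 1))"
      using sq_dvd_geom dvd_trans by blast
    thus "int p ^ 2 dvd int a ^ l * ((int a ^ (p - 1)) ^ k - 1 - int k * (int a ^ (p - 1) - 1))"
      by simp
  qed
  finally show ?thesis .
qed

lemma ring_id: fixes L K P Sm Sl Sq :: int
  shows "L * Sm - (L + K * P - K) * Sl = L * (Sm - Sl - K * (Sq - Sl)) + K * (Sl + L * (Sq - Sl)) - K * P * Sl"
  by (simp add: algebra_simps)

lemma KummerI: assumes "prime p" "even l" "2 \<le> l" "l + 3 \<le> p"
  shows "int p ^ 2 dvd int l * Si p (l + k * (p - 1)) - int (l + k * (p - 1)) * Si p l"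
proof -
  let ?D = "Si p (l + (p - 1)) - Si p l"
  have nd1: "\<not> (p - 1) dvd l" using assms by (auto dest: dvd_imp_le)
  have pl: "Si p l mod 1 = 0" by simp
  have h1: "int p dvd Si p l" by (rule P0[OF assms(1) nd1])
  have "l + l * (p - 1) = l * p" using assms by (simp add: algebra_simps)
  moreover have "\<not> (p - 1) dvd l * p"
  proof
    assume "(p - 1) dvd l * p"
    moreover have "coprime (p - 1) p" using assms
      by (metis coprime_diff_one_left_nat prime_gt_0_nat)
    ultimately have "(p - 1) dvd l" by (simp add: coprime_dvd_mult_left_iff)
    thus False using nd1 by simp
  qed
  ultimately have h2: "int p ^ 2 dvd Si p (l + l * (p - 1))" using P1[OF assms(1)] by simp
  have h3: "int p ^ 2 dvd Si p (l + l * (p - 1)) - Si p l - int l * ?D" using Lin[OF assms(1), of l l] .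
  have h4: "int p ^ 2 dvd Si p l + int l * ?D"
  proof -
    have eq: "Si p l + int l * ?D = Si p (l + l * (p - 1)) - (Si p (l + l * (p - 1)) - Si p l - int l * ?D)" by simp
    show ?thesis unfolding eq by (rule dvd_diff[OF h2 h3])
  qed
  have h5: "int p ^ 2 dvd Si p (l + k * (p - 1)) - Si p l - int k * ?D" using Lin[OF assms(1), of l k] .
  have h6: "int p ^ 2 dvd int k * int p * Si p l"
    using h1 by (simp add: power2_eq_square mult_dvd_mono)
  have e: "int l * Si p (l + k * (p - 1)) - int (l + k * (p - 1)) * Si p l =
     int l * (Si p (l + k * (p - 1)) - Si p l - int k * ?D) + int k * (Si p l + int l * ?D)
     - int k * int p * Si p l"
  proof -
    have p1: "int (p - 1) = int p - 1" using assms by (simp add: of_nat_diff)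
    have i: "int (l + k * (p - 1)) = int l + int k * int p - int k"
      unfolding of_nat_add of_nat_mult p1 by (simp add: algebra_simps)
    show ?thesis unfolding i by (rule ring_id)
  qed
  show ?thesis unfolding e by (rule dvd_diff[OF dvd_add[OF dvd_mult[OF h5] dvd_mult[OF h4]] h6])
qed

lemma alg: fixes P L M Sm Sl Xm Xl T :: rat
  assumes "P \<noteq> 0" "L * Sm - M * Sl = P^2 * T"
  shows "(L * ((Sm - P^2 * Xm) / P) - M * ((Sl - P^2 * Xl) / P)) / P = T - (L * Xm - M * Xl)"
proof -
  have "(L * ((Sm - P^2 * Xm) / P) - M * ((Sl - P^2 * Xl) / P)) / P =
     (L * Sm - M * Sl) / P^2 - (L * Xm - M * Xl)"
    using assms(1) by (simp add: field_simps power2_eq_square)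
  thus ?thesis using assms by simp
qed

lemma solveB: fixes P X S B :: rat assumes "P \<noteq> 0" "X = (S - P * B) / P ^ 2"
  shows "B = (S - P ^ 2 * X) / P"
  using assms by (simp add: field_simps power2_eq_square)

lemma Kummer: assumes "prime p" "even l" "2 \<le> l" "l + 3 \<le> p"
  shows "pint p ((of_nat l * bernoulli (l + k * (p - 1)) - of_nat (l + k * (p - 1)) * bernoulli l) / of_nat p)"
proof -
  let ?m = "l + k * (p - 1)"
  have p5: "p \<ge> 5" using assms by simp
  have em: "even ?m" using assms by (simp add: prime_odd_nat)
  have m2: "?m \<ge> 2" using assms by simp
  have p0: "(of_nat p :: rat) \<noteq> 0" using assms by simp
  define Xm where "Xm = (Sp p ?m - of_nat p * bernoulli ?m) / of_nat p ^ 2"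
  define Xl where "Xl = (Sp p l - of_nat p * bernoulli l) / of_nat p ^ 2"
  have pm: "pint p Xm" unfolding Xm_def by (rule F2[OF assms(1) p5 em m2])
  have pl: "pint p Xl" unfolding Xl_def by (rule F2[OF assms(1) p5 assms(2,3)])
  obtain t where t: "int l * Si p ?m - int ?m * Si p l = int p ^ 2 * t"
    using KummerI[OF assms, of k] by (auto elim: dvdE)
  have sm: "Sp p ?m = of_int (Si p ?m)" using m2 by (intro Sp_Si) simp
  have sl: "Sp p l = of_int (Si p l)" using assms by (intro Sp_Si) simp
  have "(of_nat l * bernoulli ?m - of_nat ?m * bernoulli l) / of_nat p =
      of_int t - (of_nat l * Xm - of_nat ?m * Xl)"
  proof -
    have "of_int (int l * Si p ?m - int ?m * Si p l) = (of_int (int p ^ 2 * t) :: rat)" using t by simp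
    hence ht: "of_nat l * of_int (Si p ?m) - of_nat ?m * of_int (Si p l) = (of_nat p ^ 2 * of_int t :: rat)"
      by (simp only: of_int_diff of_int_mult of_int_of_nat_eq of_int_power)
    have hb: "bernoulli ?m = (of_int (Si p ?m) - of_nat p ^ 2 * Xm) / of_nat p"
      unfolding sm[symmetric] by (rule solveB[OF p0 Xm_def])
    have hl: "bernoulli l = (of_int (Si p l) - of_nat p ^ 2 * Xl) / of_nat p"
      unfolding sl[symmetric] by (rule solveB[OF p0 Xl_def])
    show ?thesis unfolding hb hl by (rule alg[OF p0 ht])
  qed
  moreover have "pint p (of_int t - (of_nat l * Xm - of_nat ?m * Xl))"
    using assms(1) pm pl
    by (intro pint_diff pint_mult pint_of_int pint_of_nat) auto
  ultimately show ?thesis by simp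
qed

lemma num_div_nat: assumes "M > 0"
  shows "num (x / of_nat M) = num x div gcd (num x) (int M)"
proof -
  obtain n d where q: "quotient_of x = (n, d)" by (cases "quotient_of x") auto
  have d0: "d > 0" using quotient_of_denom_pos[OF q] .
  have cop: "coprime n d" using quotient_of_coprime[OF q] .
  have xe: "x = of_int n / of_int d" using quotient_of_div[OF q] .
  have "x / of_nat M = Rat.Fract n (d * int M)"
    using xe d0 assms by (simp add: Fract_of_int_quotient)
  hence "quotient_of (x / of_nat M) = Rat.normalize (n, d * int M)" by (simp add: quotient_of_Fract)
  moreover have "d * int M > 0" using d0 assms by simp
  ultimately have "num (x / of_nat M) = n div gcd n (d * int M)"
    by (simp add: num_def Rat.normalize_def Let_def)
  also have "gcd n (d * int M) = gcd n (int M)" using cop by (rule gcd_mult_right_left_cancel)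
  finally show ?thesis by (simp add: num_def q)
qed

lemma Q_eq: assumes "m \<ge> 2"
  shows "Q m = (if num (bernoulli m / of_nat m) = 0 then 0
                else of_int (gcd (num (bernoulli m / of_nat m)) (int (m - 1))))"
proof -
  let ?x = "bernoulli m / of_nat m"
  let ?N = "num ?x"
  have "bernoulli m / (of_nat m * (of_nat m - 1)) = ?x / of_nat (m - 1)"
    using assms by (simp add: of_nat_diff)
  hence "Q m = of_int ?N / of_int (?N div gcd ?N (int (m - 1)))"
    unfolding Q_def using num_div_nat[of "m - 1" ?x] assms by simp
  moreover have "?N \<noteq> 0 \<Longrightarrow> of_int ?N / of_int (?N div gcd ?N (int (m - 1))) = (of_int (gcd ?N (int (m - 1))) :: rat)"
  proof -
    assume N: "?N \<noteq> 0"
    obtain c where c: "?N = gcd ?N (int (m - 1)) * c" by (meson gcd_dvd1 dvdE)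
    have g0: "gcd ?N (int (m - 1)) \<noteq> 0" using N by simp
    have "?N div gcd ?N (int (m - 1)) = c" using c g0 by (metis nonzero_mult_div_cancel_left)
    moreover have "c \<noteq> 0" using c N by auto
    moreover have "(of_int ?N :: rat) = of_int (gcd ?N (int (m - 1))) * of_int c"
      using c by (metis of_int_mult)
    ultimately show ?thesis by simp
  qed
  ultimately show ?thesis by auto
qed

lemma Q_p: assumes "m \<ge> 2" "Q m = of_nat p" "prime p"
  shows "num (bernoulli m / of_nat m) \<noteq> 0 \<and> gcd (num (bernoulli m / of_nat m)) (int (m - 1)) = int p"
  using assms Q_eq[OF assms(1)] by (auto split: if_splits simp: prime_gt_0_nat)

lemma first_part: assumes ip: "irregular_pair p l" and mA: "m \<in> A_set p l"
  shows "(l - 1) * p + 1 \<le> m"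
proof -
  have pr: "prime p" "even l" "2 \<le> l" "l + 3 \<le> p" using ip by (auto simp: irregular_pair_def)
  obtain k where k: "m = l + k * (p - 1)" "Q m = of_nat p" using mA by (auto simp: A_set_def)
  have m2: "m \<ge> 2" using k pr by simp
  have "gcd (num (bernoulli m / of_nat m)) (int (m - 1)) = int p" using Q_p[OF m2 k(2) pr(1)] by simp
  hence "int p dvd int (m - 1)" by (metis gcd_dvd2)
  hence pd: "p dvd m - 1" by simp
  show ?thesis
  proof (rule ccontr)
    assume "\<not> ?thesis"
    hence kl: "k < l - 1"
    proof -
      assume h: "\<not> (l - 1) * p + 1 \<le> m"
      show "k < l - 1"
      proof (rule ccontr)
        assume "\<not> k < l - 1"
        hence "k * (p - 1) \<ge> (l - 1) * (p - 1)" by simp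
        hence "m \<ge> l + (l - 1) * (p - 1)" using k by simp
        moreover have "l + (l - 1) * (p - 1) = (l - 1) * p + 1" using pr
          by (cases l) (auto simp: algebra_simps)
        ultimately show False using h by simp
      qed
    qed
    have "m - 1 = (l - 1 - k) + k * p" using k kl pr
      by (cases p) (auto simp: algebra_simps)
    hence "p dvd (l - 1 - k)" using pd by (metis dvd_add_left_iff dvd_triv_right)
    moreover have "0 < l - 1 - k" "l - 1 - k < p" using kl pr by auto
    ultimately show False by (auto dest: dvd_imp_le)
  qed
qed

lemma num_B2: "num (bernoulli 2) = 1"
proof -
  have "bernoulli 2 = Rat.Fract 1 6" using bern_small by (simp add: Fract_of_int_quotient)
  hence "quotient_of (bernoulli 2) = Rat.normalize (1, 6)" by (simp add: quotient_of_Fract)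
  thus ?thesis by (simp add: num_def Rat.normalize_def)
qed

lemma p_dvd_N: assumes ip: "irregular_pair p l"
  shows "int p dvd num (bernoulli ((l - 1) * p + 1) / of_nat ((l - 1) * p + 1))"
proof -
  have pr: "prime p" "even l" "2 \<le> l" "l + 3 \<le> p" "int p dvd num (bernoulli l)"
    using ip by (auto simp: irregular_pair_def)
  let ?m = "(l - 1) * p + 1"
  have me: "l + (l - 1) * (p - 1) = ?m" using pr by (cases l; cases p) (auto simp: algebra_simps)
  have K: "pint p ((of_nat l * bernoulli ?m - of_nat ?m * bernoulli l) / of_nat p)"
    using Kummer[OF pr(1-4), of "l - 1"] unfolding me .
  have hl: "pint p (bernoulli l / of_nat p)" using pr(5) num_dvd_iff[OF pr(1)] by simp
  have eqx: "of_nat l * bernoulli ?m / of_nat p =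
     (of_nat l * bernoulli ?m - of_nat ?m * bernoulli l) / of_nat p + of_nat ?m * (bernoulli l / of_nat p)"
    by (simp only: diff_divide_distrib times_divide_eq_right diff_add_cancel)
  have h1: "pint p (of_nat l * bernoulli ?m / of_nat p)"
    unfolding eqx by (rule pint_add[OF pr(1) K pint_mult[OF pr(1) pint_of_nat[OF pr(1)] hl]])
  have ndl: "\<not> p dvd l" using pr by (auto dest: dvd_imp_le)
  have ndm: "\<not> p dvd ?m"
  proof
    assume "p dvd ?m"
    hence "p dvd ?m - (l - 1) * p" by (rule dvd_diff_nat) simp
    hence "p dvd 1" by simp
    thus False using pr by simp
  qed
  have "bernoulli ?m / of_nat ?m / of_nat p = of_nat l * bernoulli ?m / of_nat p / of_nat l / of_nat ?m"
    using pr by (simp add: field_simps)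
  hence "pint p (bernoulli ?m / of_nat ?m / of_nat p)"
    using pint_div_nat[OF pr(1) pint_div_nat[OF pr(1) h1 ndl] ndm] by simp
  thus ?thesis using num_dvd_iff[OF pr(1)] by simp
qed

lemma regular_q: assumes ip: "irregular_pair p l" and q: "prime q" "q dvd l - 1" "\<not> irregular_prime q"
  shows "\<not> int q dvd num (bernoulli ((l - 1) * p + 1) / of_nat ((l - 1) * p + 1))"
proof
  have pr: "prime p" "even l" "2 \<le> l" "l + 3 \<le> p" "int p dvd num (bernoulli l)"
    using ip by (auto simp: irregular_pair_def)
  let ?m = "(l - 1) * p + 1"
  assume h: "int q dvd num (bernoulli ?m / of_nat ?m)"
  have oq: "odd q"
  proof
    assume "even q"
    hence "even (l - 1)" using q(2) by (rule dvd_trans)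
    thus False using pr(2,3) by simp
  qed
  have q3: "q \<ge> 3" using oq prime_ge_2_nat[OF q(1)] by (cases "q = 2") auto
  have ndm: "\<not> q dvd ?m"
  proof
    assume "q dvd ?m"
    moreover have "q dvd (l - 1) * p" using q(2) by simp
    ultimately have "q dvd ?m - (l - 1) * p" by (rule dvd_diff_nat)
    hence "q dvd 1" by simp
    thus False using q(1) by simp
  qed
  have m0: "?m \<noteq> 0" by simp
  have em: "even ?m" using pr oq by (simp add: prime_odd_nat)
  have "pint q (bernoulli ?m / of_nat ?m / of_nat q)" using h num_dvd_iff[OF q(1)] by simp
  hence hB0: "pint q (bernoulli ?m / of_nat ?m / of_nat q * of_nat ?m)"
    using pint_mult[OF q(1) _ pint_of_nat[OF q(1), of ?m]] by blast
  have "bernoulli ?m / of_nat ?m / of_nat q * of_nat ?m = bernoulli ?m / of_nat q"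
    using m0 by (simp del: of_nat_add of_nat_mult)
  hence hB: "pint q (bernoulli ?m / of_nat q)" using hB0 by simp
  show False
  proof (cases "(q - 1) dvd ?m")
    case True
    have q0: "(of_nat q :: rat) \<noteq> 0" using q(1) by simp
    have B: "pint q (bernoulli ?m)"
    proof -
      have "bernoulli ?m = bernoulli ?m / of_nat q * of_nat q" using q0 by simp
      thus ?thesis using pint_mult[OF q(1) hB pint_of_nat[OF q(1), of q]] by metis
    qed
    have F: "pint q ((Sp q ?m - of_nat q * bernoulli ?m) / of_nat q)" using F1[OF q(1) q3] by blast
    have "Sp q ?m / of_nat q = (Sp q ?m - of_nat q * bernoulli ?m) / of_nat q + bernoulli ?m"
      using q0 by (simp add: field_simps)
    hence "pint q (Sp q ?m / of_nat q)" using pint_add[OF q(1) F B] by simp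
    hence "pint q (of_int (Si q ?m) / of_nat q)" using Sp_Si[of ?m q] by simp
    hence "int q dvd Si q ?m" by (rule pint_int_dvd[OF q(1)])
    moreover have "int q dvd Si q ?m + 1" by (rule P2[OF q(1) True])
    ultimately have "int q dvd 1" by (simp add: dvd_add_right_iff)
    thus False using q(1) by simp
  next
    case False
    have q5: "q \<ge> 5"
    proof -
      have "q \<noteq> 3" using False em by auto
      moreover have "q \<noteq> 4" using oq by auto
      ultimately show ?thesis using q3 by simp
    qed
    define l' where "l' = ?m mod (q - 1)"
    define k where "k = ?m div (q - 1)"
    have mk: "l' + k * (q - 1) = ?m" unfolding l'_def k_def by (rule mod_div_mult_eq)
    have eq1: "even (q - 1)" using oq by simp
    have el: "even l'"
    proof -
      have "even (k * (q - 1))" using eq1 by simp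
      thus ?thesis using em mk by (metis even_add)
    qed
    have l0: "l' \<noteq> 0" using False unfolding l'_def by (simp add: dvd_eq_mod_eq_0)
    have lt: "l' < q - 1" unfolding l'_def using q5 by simp
    have l2: "2 \<le> l'" using el l0 by (auto elim!: evenE)
    have l3: "l' + 3 \<le> q"
    proof -
      obtain t where t: "q = 2 * t + 1" using oq by (auto elim!: oddE)
      have "q - 2 = 2 * (t - 1) + 1" using t q5 by simp
      hence "odd (q - 2)" by simp
      hence "l' \<noteq> q - 2" using el by auto
      thus ?thesis using lt by simp
    qed
    have K: "pint q ((of_nat l' * bernoulli ?m - of_nat ?m * bernoulli l') / of_nat q)"
      using Kummer[OF q(1) el l2 l3, of k] unfolding mk .
    have "of_nat ?m * bernoulli l' / of_nat q =
        of_nat l' * (bernoulli ?m / of_nat q) - (of_nat l' * bernoulli ?m - of_nat ?m * bernoulli l') / of_nat q"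
      by (simp only: times_divide_eq_right diff_divide_distrib diff_diff_cancel)
    hence "pint q (of_nat ?m * bernoulli l' / of_nat q)"
      using pint_diff[OF q(1) pint_mult[OF q(1) pint_of_nat[OF q(1)] hB] K] by simp
    hence "pint q (of_nat ?m * bernoulli l' / of_nat q / of_nat ?m)" by (rule pint_div_nat[OF q(1) _ ndm])
    moreover have "of_nat ?m * bernoulli l' / of_nat q / of_nat ?m = bernoulli l' / of_nat q"
      using m0 by (simp del: of_nat_add of_nat_mult)
    ultimately have "pint q (bernoulli l' / of_nat q)" by simp
    hence "int q dvd num (bernoulli l')" using num_dvd_iff[OF q(1)] by simp
    hence "irregular_pair q l'" using q(1) oq el l2 l3 by (simp add: irregular_pair_def)
    hence "irregular_prime q" using q(1) oq by (auto simp: irregular_prime_def)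
    thus False using q(3) by simp
  qed
qed

theorem theorem2p1:
  fixes p l :: nat
  assumes "irregular_pair p l"
  shows "(\<forall>m \<in> A_set p l. (l - 1) * p + 1 \<le> m) \<and>
         ((A_set p l \<noteq> {} \<and> A p l = (l - 1) * p + 1) \<longleftrightarrow>
            ((\<forall>q. prime q \<and> q dvd (l - 1) \<longrightarrow> \<not> irregular_prime q) \<or>
             (\<forall>q. prime q \<and> q dvd (l - 1) \<and> irregular_prime q \<longrightarrow>
                \<not> int q dvd num (bernoulli ((l - 1) * p + 1) / of_nat ((l - 1) * p + 1)))))"
proof -
  have pr: "prime p" "even l" "2 \<le> l" "l + 3 \<le> p" "int p dvd num (bernoulli l)"
    using assms by (auto simp: irregular_pair_def)
  let ?m = "(l - 1) * p + 1"
  let ?N = "num (bernoulli ?m / of_nat ?m)"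
  have FP: "\<forall>m \<in> A_set p l. ?m \<le> m" using first_part[OF assms] by blast
  have l2: "l \<noteq> 2"
  proof
    assume "l = 2"
    hence "int p dvd 1" using pr(5) num_B2 by simp
    thus False using pr(1) by simp
  qed
  have l1: "l - 1 \<noteq> 1" using pr(3) l2 by simp
  have l0: "l - 1 \<noteq> 0" using pr(3) by simp
  have m2: "?m \<ge> 2" using pr l0 by (cases "l - 1") (auto simp: prime_gt_0_nat)
  have mm1: "?m - 1 = (l - 1) * p" by simp
  have me: "?m = l + (l - 1) * (p - 1)" using pr by (cases l; cases p) (auto simp: algebra_simps)
  have "((A_set p l \<noteq> {} \<and> A p l = ?m) \<longleftrightarrow>
            ((\<forall>q. prime q \<and> q dvd (l - 1) \<longrightarrow> \<not> irregular_prime q) \<or>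
             (\<forall>q. prime q \<and> q dvd (l - 1) \<and> irregular_prime q \<longrightarrow> \<not> int q dvd ?N)))"
  proof
    assume h: "A_set p l \<noteq> {} \<and> A p l = ?m"
    have "A p l \<in> A_set p l" unfolding A_def using h by (metis LeastI ex_in_conv)
    hence "Q ?m = of_nat p" using h by (simp add: A_set_def)
    hence g: "gcd ?N (int (?m - 1)) = int p" using Q_p[OF m2 _ pr(1)] by blast
    have "\<forall>q. prime q \<and> q dvd (l - 1) \<and> irregular_prime q \<longrightarrow> \<not> int q dvd ?N"
    proof (intro allI impI notI)
      fix q assume q: "prime q \<and> q dvd (l - 1) \<and> irregular_prime q" and d: "int q dvd ?N"
      have "int q dvd int (?m - 1)" unfolding mm1 using q by simp
      hence "int q dvd int p" using d g by (metis gcd_greatest)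
      hence "q dvd p" by simp
      hence "q = p" using q pr(1) by (simp add: primes_dvd_imp_eq)
      hence "p dvd l - 1" using q by simp
      hence "p \<le> l - 1" using l0 by (simp add: dvd_imp_le)
      thus False using pr by simp
    qed
    thus "(\<forall>q. prime q \<and> q dvd (l - 1) \<longrightarrow> \<not> irregular_prime q) \<or>
             (\<forall>q. prime q \<and> q dvd (l - 1) \<and> irregular_prime q \<longrightarrow> \<not> int q dvd ?N)" by blast
  next
    assume h: "(\<forall>q. prime q \<and> q dvd (l - 1) \<longrightarrow> \<not> irregular_prime q) \<or>
             (\<forall>q. prime q \<and> q dvd (l - 1) \<and> irregular_prime q \<longrightarrow> \<not> int q dvd ?N)"
    have nq: "\<not> int q dvd ?N" if q: "prime q" "q dvd l - 1" for q
    proof (cases "irregular_prime q")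
      case True
      then show ?thesis using h q by blast
    next
      case False
      then show ?thesis using regular_q[OF assms q False] by simp
    qed
    have cop: "coprime ?N (int (l - 1))"
    proof (rule coprimeI)
      fix c assume c1: "c dvd ?N" and c2: "c dvd int (l - 1)"
      show "is_unit c"
      proof (rule ccontr)
        assume nu: "\<not> is_unit c"
        hence "\<bar>c\<bar> \<noteq> 1" by auto
        then obtain r where r: "prime r" "r dvd c" using prime_factor_int by blast
        have r0: "r \<ge> 0" using r(1) by (simp add: prime_ge_0_int)
        define q where "q = nat r"
        have rq: "r = int q" using r0 q_def by simp
        have pq: "prime q" using r(1) rq by (simp add: prime_nat_iff_prime)
        have "int q dvd int (l - 1)" using r(2) c2 rq by (metis dvd_trans)
        hence "q dvd l - 1" by simp
        moreover have "int q dvd ?N" using r(2) c1 rq by (metis dvd_trans)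
        ultimately show False using nq pq by blast
      qed
    qed
    obtain q0 where q0: "prime q0" "q0 dvd l - 1" using prime_factor_nat[OF l1] by blast
    have N0: "?N \<noteq> 0" using nq[OF q0] by auto
    have "gcd ?N (int (?m - 1)) = gcd ?N (int (l - 1) * int p)" unfolding mm1 by simp
    also have "\<dots> = gcd ?N (int p)" using cop by (rule gcd_mult_right_left_cancel)
    also have "\<dots> = int p" using p_dvd_N[OF assms] by simp
    finally have g: "gcd ?N (int (?m - 1)) = int p" .
    have "Q ?m = of_nat p" using Q_eq[OF m2] N0 g by simp
    hence mA: "?m \<in> A_set p l" unfolding A_set_def using me by blast
    have "A p l = ?m" unfolding A_def
      by (rule Least_equality) (use mA FP in auto)
    with mA show "A_set p l \<noteq> {} \<and> A p l = ?m" by blast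
  qed
  with FP show ?thesis by blast
qed


end
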